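(* Let $P$ be a poset with an $\mathbb{R}$-action $\Lambda$, and let $V,W$ be interval-decomposable pfd $P$-persistence modules. If, for some $\epsilon\ge0$, there exists a $\Lambda_\epsilon$-matching between $\mathscr{B}(V)$ and $\mathscr{B}(W)$, then this same partial matching is a bottleneck $\Lambda_\epsilon$-interleaving between $V$ and $W$. Consequently, $$d^\Lambda_{\mathrm{BI}}(V,W)\le d^\Lambda_{\mathrm B}(\mathscr{B}(V),\mathscr{B}(W)).$$
   Context: Let $k$ be a field. A $P$-persistence module is a functor from the poset $P$ (as a category) to $k$-vector spaces; it is pfd if every space is finite-dimensional. An interval of $P$ is a nonempty convex and connected subset (convex: $p,q\in I$, $p\le r\le q$ imply $r\in I$; connected: any two elements are joined by a finite sequence in $I$ with consecutive ones comparable). The interval module $k_I$ is $k$ on $I$ and $0$ elsewhere, with identity maps within $I$ and zero maps otherwise. Every pfd module decomposes uniquely (up to isomorphism and permutation) into indecomposables; $\mathscr{B}(V)$ is the multiset of these summands. $V$ is interval-decomposable if all summands are interval modules; $\mathscr{B}(V)$ is then identified with a multiset of intervals. An $\mathbb{R}$-action on $P$ is a family $\{\Lambda_\epsilon\}_{\epsilon\ge0}$ of poset automorphisms with $p\le\Lambda_\epsilon(p)$, $\Lambda_0=\mathrm{id}$ and $\Lambda_\epsilon\Lambda_\zeta=\Lambda_{\epsilon+\zeta}$. Shifts and interleavings: - $V(\epsilon)_p=V_{\Lambda_\epsilon p}$ and $V(\epsilon)(p,q)=V(\Lambda_\epsilon p,\Lambda_\epsilon q)$; for a morphism $\phi$,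 $\phi(\epsilon)$ has components $\phi_{\Lambda_\epsilon p}$; - $V_{0\to\epsilon}\colon V\to V(\epsilon)$ has components $V(p,\Lambda_\epsilon p)$; - a $\Lambda_\epsilon$-interleaving is a pair $\alpha\colon V\to W(\epsilon)$, $\beta\colon W\to V(\epsilon)$ with $\beta(\epsilon)\alpha=V_{0\to2\epsilon}$ and $\alpha(\epsilon)\beta=W_{0\to2\epsilon}$; - $V$ is $\Lambda_\epsilon$-trivial if $V_{0\to\epsilon}=0$. For $A\subseteq P$ nonempty, $A^\uparrow=\{p:\exists a\in A,\ a\le p\}$ and $A^\downarrow=\{p:\exists a\in A,\ p\le a\}$; $\emptyset^\uparrow=\emptyset^\downarrow=P$. Set $\mathrm{Ex}^\Lambda_\epsilon(A)=\Lambda_\epsilon^{-1}(A)^\uparrow\cap\Lambda_\epsilon(A)^\downarrow$, with $\Lambda_\epsilon^{-1}(A)$ the preimage. A $\Lambda_\epsilon$-matching between multisets of intervals $\mathscr{A},\mathscr{C}$ is a bijection $\sigma$ between submultisets such that: - every unmatched interval $I$ has $k_I$ $\Lambda_{2\epsilon}$-trivial; - $\sigma(I)=J$ implies $I\subseteq\mathrm{Ex}^\Lambda_\epsilon(J)$ and $J\subseteq\mathrm{Ex}^\Lambda_\epsilon(I)$. A bottleneck $\Lambda_\epsilon$-interleaving between $V$ and $W$ is a bijection $\sigma$ between submultisets of $\mathscr{B}(V)$ and $\mathscr{B}(W)$ such that: - all unmatched summands are $\Lambda_{2\epsilon}$-trivial; - each $M$ and $\sigma(M)$ are $\Lambda_\epsilon$-interleaved.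 $d^\Lambda_{\mathrm{BI}}$ and $d^\Lambda_{\mathrm B}$ are the infima of $\epsilon\ge0$ admitting a bottleneck $\Lambda_\epsilon$-interleaving, resp. a $\Lambda_\epsilon$-matching ($\inf\emptyset=+\infty$). *)

theory Defs
  imports "Jordan_Normal_Form.Matrix" "HOL-Library.Extended_Real"
begin

text \<open>Pfd persistence modules over a poset 'p with coefficients in a field 'k,
  represented concretely: the space at p is 'k^(pdim p) and the structure map
  V(p,q) for p \<le> q is a (pdim q) x (pdim p) matrix.\<close>

record ('p, 'k) pmod =
  pdim :: "'p \<Rightarrow> nat"
  pmap :: "'p \<Rightarrow> 'p \<Rightarrow> 'k mat"

definition is_pmod :: "('p::order, 'k::field) pmod \<Rightarrow> bool" where
  "is_pmod V \<longleftrightarrow>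
     (\<forall>p q. p \<le> q \<longrightarrow> pmap V p q \<in> carrier_mat (pdim V q) (pdim V p)) \<and>
     (\<forall>p. pmap V p p = 1\<^sub>m (pdim V p)) \<and>
     (\<forall>p q r. p \<le> q \<and> q \<le> r \<longrightarrow> pmap V q r * pmap V p q = pmap V p r)"

definition is_morph :: "('p::order, 'k::field) pmod \<Rightarrow> ('p, 'k) pmod \<Rightarrow> ('p \<Rightarrow> 'k mat) \<Rightarrow> bool" where
  "is_morph V W \<phi> \<longleftrightarrow>
     (\<forall>p. \<phi> p \<in> carrier_mat (pdim W p) (pdim V p)) \<and>
     (\<forall>p q. p \<le> q \<longrightarrow> pmap W p q * \<phi> p = \<phi> q * pmap V p q)"

definition nonzero_pmod :: "('p, 'k) pmod \<Rightarrow> bool" where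
  "nonzero_pmod V \<longleftrightarrow> (\<exists>p. pdim V p \<noteq> 0)"

definition is_decomp ::
  "('p::order, 'k::field) pmod \<Rightarrow> 'i set \<Rightarrow> ('i \<Rightarrow> ('p, 'k) pmod)
     \<Rightarrow> ('i \<Rightarrow> 'p \<Rightarrow> 'k mat) \<Rightarrow> ('i \<Rightarrow> 'p \<Rightarrow> 'k mat) \<Rightarrow> bool" where
  "is_decomp V X M \<iota> \<pi> \<longleftrightarrow>
     (\<forall>x\<in>X. is_pmod (M x) \<and> is_morph (M x) V (\<iota> x) \<and> is_morph V (M x) (\<pi> x)) \<and>
     (\<forall>x\<in>X. \<forall>y\<in>X. \<forall>p. \<pi> x p * \<iota> y p =
        (if x = y then 1\<^sub>m (pdim (M x) p) else 0\<^sub>m (pdim (M x) p) (pdim (M y) p))) \<and>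
     (\<forall>p. finite {x\<in>X. pdim (M x) p \<noteq> 0} \<and>
        (\<forall>i < pdim V p. \<forall>j < pdim V p.
           (\<Sum>x\<in>{x\<in>X. pdim (M x) p \<noteq> 0}. (\<iota> x p * \<pi> x p) $$ (i, j)) = (1\<^sub>m (pdim V p)) $$ (i, j)))"

definition indecomposable :: "('p::order, 'k::field) pmod \<Rightarrow> bool" where
  "indecomposable M \<longleftrightarrow> is_pmod M \<and> nonzero_pmod M \<and>
     \<not> (\<exists>(N :: bool \<Rightarrow> ('p, 'k) pmod) \<iota> \<pi>. is_decomp M UNIV N \<iota> \<pi> \<and> (\<forall>b. nonzero_pmod (N b)))"

definition indec_decomp ::
  "('p::order, 'k::field) pmod \<Rightarrow> 'i set \<Rightarrow> ('i \<Rightarrow> ('p, 'k) pmod)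
     \<Rightarrow> ('i \<Rightarrow> 'p \<Rightarrow> 'k mat) \<Rightarrow> ('i \<Rightarrow> 'p \<Rightarrow> 'k mat) \<Rightarrow> bool" where
  "indec_decomp V X M \<iota> \<pi> \<longleftrightarrow> is_decomp V X M \<iota> \<pi> \<and> (\<forall>x\<in>X. indecomposable (M x))"

definition is_interval :: "'p::order set \<Rightarrow> bool" where
  "is_interval I \<longleftrightarrow> I \<noteq> {} \<and>
     (\<forall>p\<in>I. \<forall>q\<in>I. \<forall>r. p \<le> r \<and> r \<le> q \<longrightarrow> r \<in> I) \<and>
     (\<forall>p\<in>I. \<forall>q\<in>I. (\<lambda>x y. x \<in> I \<and> y \<in> I \<and> (x \<le> y \<or> y \<le> x))\<^sup>*\<^sup>* p q)"

definition kI :: "'p::order set \<Rightarrow> ('p, 'k::field) pmod" where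
  "kI I = \<lparr> pdim = (\<lambda>p. if p \<in> I then 1 else 0),
            pmap = (\<lambda>p q. if p \<in> I \<and> q \<in> I then 1\<^sub>m 1
                          else 0\<^sub>m (if q \<in> I then 1 else 0) (if p \<in> I then 1 else 0)) \<rparr>"

definition interval_decomp ::
  "('p::order, 'k::field) pmod \<Rightarrow> 'i set \<Rightarrow> ('i \<Rightarrow> 'p set)
     \<Rightarrow> ('i \<Rightarrow> 'p \<Rightarrow> 'k mat) \<Rightarrow> ('i \<Rightarrow> 'p \<Rightarrow> 'k mat) \<Rightarrow> bool" where
  "interval_decomp V X I \<iota> \<pi> \<longleftrightarrow> (\<forall>x\<in>X. is_interval (I x)) \<and> is_decomp V X (\<lambda>x. kI (I x)) \<iota> \<pi>"

definition R_action :: "(real \<Rightarrow> 'p::order \<Rightarrow> 'p) \<Rightarrow> bool" where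
  "R_action \<Lambda> \<longleftrightarrow>
     (\<forall>\<epsilon>\<ge>0. bij (\<Lambda> \<epsilon>) \<and> (\<forall>p q. \<Lambda> \<epsilon> p \<le> \<Lambda> \<epsilon> q \<longleftrightarrow> p \<le> q) \<and> (\<forall>p. p \<le> \<Lambda> \<epsilon> p)) \<and>
     \<Lambda> 0 = id \<and>
     (\<forall>\<epsilon>\<ge>0. \<forall>\<zeta>\<ge>0. \<Lambda> \<epsilon> \<circ> \<Lambda> \<zeta> = \<Lambda> (\<epsilon> + \<zeta>))"

definition shift :: "(real \<Rightarrow> 'p \<Rightarrow> 'p) \<Rightarrow> real \<Rightarrow> ('p, 'k) pmod \<Rightarrow> ('p, 'k) pmod" where
  "shift \<Lambda> \<epsilon> V = \<lparr> pdim = (\<lambda>p. pdim V (\<Lambda> \<epsilon> p)), pmap = (\<lambda>p q. pmap V (\<Lambda> \<epsilon> p) (\<Lambda> \<epsilon> q)) \<rparr>"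

definition transl :: "(real \<Rightarrow> 'p \<Rightarrow> 'p) \<Rightarrow> real \<Rightarrow> ('p, 'k) pmod \<Rightarrow> 'p \<Rightarrow> 'k mat" where
  "transl \<Lambda> \<epsilon> V = (\<lambda>p. pmap V p (\<Lambda> \<epsilon> p))"

definition interleaved :: "(real \<Rightarrow> 'p::order \<Rightarrow> 'p) \<Rightarrow> real \<Rightarrow> ('p, 'k::field) pmod \<Rightarrow> ('p, 'k) pmod \<Rightarrow> bool" where
  "interleaved \<Lambda> \<epsilon> V W \<longleftrightarrow>
     (\<exists>\<alpha> \<beta>. is_morph V (shift \<Lambda> \<epsilon> W) \<alpha> \<and> is_morph W (shift \<Lambda> \<epsilon> V) \<beta> \<and>
        (\<forall>p. \<beta> (\<Lambda> \<epsilon> p) * \<alpha> p = transl \<Lambda> (2 * \<epsilon>) V p) \<and>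
        (\<forall>p. \<alpha> (\<Lambda> \<epsilon> p) * \<beta> p = transl \<Lambda> (2 * \<epsilon>) W p))"

definition trivial :: "(real \<Rightarrow> 'p \<Rightarrow> 'p) \<Rightarrow> real \<Rightarrow> ('p, 'k::zero) pmod \<Rightarrow> bool" where
  "trivial \<Lambda> \<epsilon> V \<longleftrightarrow> (\<forall>p. transl \<Lambda> \<epsilon> V p = 0\<^sub>m (pdim V (\<Lambda> \<epsilon> p)) (pdim V p))"

definition upset :: "'p::order set \<Rightarrow> 'p set" where
  "upset A = (if A = {} then UNIV else {p. \<exists>a\<in>A. a \<le> p})"

definition downset :: "'p::order set \<Rightarrow> 'p set" where
  "downset A = (if A = {} then UNIV else {p. \<exists>a\<in>A. p \<le> a})"

definition Ex_set :: "(real \<Rightarrow> 'p::order \<Rightarrow> 'p) \<Rightarrow> real \<Rightarrow> 'p set \<Rightarrow> 'p set" where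
  "Ex_set \<Lambda> \<epsilon> A = upset (\<Lambda> \<epsilon> -` A) \<inter> downset (\<Lambda> \<epsilon> ` A)"

text \<open>Multisets of intervals are represented as indexed families (X, I); a bijection between
  submultisets is a bijection between subsets of the index sets.\<close>
definition Lmatching ::
  "(real \<Rightarrow> 'p::order \<Rightarrow> 'p) \<Rightarrow> real \<Rightarrow> 'i set \<Rightarrow> ('i \<Rightarrow> 'p set) \<Rightarrow> 'j set \<Rightarrow> ('j \<Rightarrow> 'p set)
     \<Rightarrow> 'i set \<Rightarrow> 'j set \<Rightarrow> ('i \<Rightarrow> 'j) \<Rightarrow> 'k::field itself \<Rightarrow> bool" where
  "Lmatching \<Lambda> \<epsilon> X I Y J X0 Y0 \<sigma> _ \<longleftrightarrow>
     X0 \<subseteq> X \<and> Y0 \<subseteq> Y \<and> bij_betw \<sigma> X0 Y0 \<and>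
     (\<forall>x\<in>X - X0. trivial \<Lambda> (2 * \<epsilon>) (kI (I x) :: ('p, 'k) pmod)) \<and>
     (\<forall>y\<in>Y - Y0. trivial \<Lambda> (2 * \<epsilon>) (kI (J y) :: ('p, 'k) pmod)) \<and>
     (\<forall>x\<in>X0. I x \<subseteq> Ex_set \<Lambda> \<epsilon> (J (\<sigma> x)) \<and> J (\<sigma> x) \<subseteq> Ex_set \<Lambda> \<epsilon> (I x))"

definition bottleneck_interleaving ::
  "(real \<Rightarrow> 'p::order \<Rightarrow> 'p) \<Rightarrow> real \<Rightarrow> ('p, 'k::field) pmod \<Rightarrow> ('p, 'k) pmod
     \<Rightarrow> 'i set \<Rightarrow> ('i \<Rightarrow> ('p, 'k) pmod) \<Rightarrow> ('i \<Rightarrow> 'p \<Rightarrow> 'k mat) \<Rightarrow> ('i \<Rightarrow> 'p \<Rightarrow> 'k mat)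
     \<Rightarrow> 'j set \<Rightarrow> ('j \<Rightarrow> ('p, 'k) pmod) \<Rightarrow> ('j \<Rightarrow> 'p \<Rightarrow> 'k mat) \<Rightarrow> ('j \<Rightarrow> 'p \<Rightarrow> 'k mat)
     \<Rightarrow> 'i set \<Rightarrow> 'j set \<Rightarrow> ('i \<Rightarrow> 'j) \<Rightarrow> bool" where
  "bottleneck_interleaving \<Lambda> \<epsilon> V W X M \<iota>V \<pi>V Y N \<iota>W \<pi>W X0 Y0 \<sigma> \<longleftrightarrow>
     indec_decomp V X M \<iota>V \<pi>V \<and> indec_decomp W Y N \<iota>W \<pi>W \<and>
     X0 \<subseteq> X \<and> Y0 \<subseteq> Y \<and> bij_betw \<sigma> X0 Y0 \<and>
     (\<forall>x\<in>X - X0. trivial \<Lambda> (2 * \<epsilon>) (M x)) \<and>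
     (\<forall>y\<in>Y - Y0. trivial \<Lambda> (2 * \<epsilon>) (N y)) \<and>
     (\<forall>x\<in>X0. interleaved \<Lambda> \<epsilon> (M x) (N (\<sigma> x)))"

text \<open>Distances (inf of the empty set is \<infinity>). For d_BI the barcodes B(V), B(W) are represented by
  any decomposition into indecomposables indexed by a subset of 'p \<times> nat (enough room, as
  each summand is nonzero at some point p and only finitely many summands are nonzero at p).\<close>
definition dBI :: "(real \<Rightarrow> 'p::order \<Rightarrow> 'p) \<Rightarrow> ('p, 'k::field) pmod \<Rightarrow> ('p, 'k) pmod \<Rightarrow> ereal" where
  "dBI \<Lambda> V W = Inf {ereal \<epsilon> | \<epsilon>. \<epsilon> \<ge> 0 \<and>
     (\<exists>(X :: ('p \<times> nat) set) M \<iota>V \<pi>V (Y :: ('p \<times> nat) set) N \<iota>W \<pi>W X0 Y0 \<sigma>.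
        bottleneck_interleaving \<Lambda> \<epsilon> V W X M \<iota>V \<pi>V Y N \<iota>W \<pi>W X0 Y0 \<sigma>)}"

definition dB :: "(real \<Rightarrow> 'p::order \<Rightarrow> 'p) \<Rightarrow> 'i set \<Rightarrow> ('i \<Rightarrow> 'p set) \<Rightarrow> 'j set \<Rightarrow> ('j \<Rightarrow> 'p set)
     \<Rightarrow> 'k::field itself \<Rightarrow> ereal" where
  "dB \<Lambda> X I Y J k = Inf {ereal \<epsilon> | \<epsilon>. \<epsilon> \<ge> 0 \<and> (\<exists>X0 Y0 \<sigma>. Lmatching \<Lambda> \<epsilon> X I Y J X0 Y0 \<sigma> k)}"

end

theory Submission imports Defs "HOL-Library.Countable_Set" begin

definition chi :: "'p set \<Rightarrow> 'p set \<Rightarrow> 'p \<Rightarrow> 'p \<Rightarrow> 'k::field mat" where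
  "chi A B p q = (if p \<in> A \<and> q \<in> B then 1\<^sub>m 1 else 0\<^sub>m (if q \<in> B then 1 else 0) (if p \<in> A then 1 else 0))"

lemma chi_mult: "(chi B C q r :: 'k::field mat) * chi A B p q =
   (if p \<in> A \<and> q \<in> B \<and> r \<in> C then 1\<^sub>m 1 else 0\<^sub>m (if r \<in> C then 1 else 0) (if p \<in> A then 1 else 0))"
  unfolding chi_def
  by (auto intro!: eq_matI simp: scalar_prod_def)

lemma kI_pmap: "pmap (kI I) p q = chi I I p q"
  by (simp add: kI_def chi_def)
lemma kI_pdim: "pdim (kI I) p = (if p \<in> I then 1 else 0)"
  by (simp add: kI_def)

lemma chi_carrier: "chi A B p q \<in> carrier_mat (if q \<in> B then 1 else 0) (if p \<in> A then 1 else 0)"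
  by (simp add: chi_def)

lemma Ract:
  assumes "R_action \<Lambda>" "\<epsilon> \<ge> 0"
  shows "bij (\<Lambda> \<epsilon>)" "\<And>p q. \<Lambda> \<epsilon> p \<le> \<Lambda> \<epsilon> q \<longleftrightarrow> p \<le> q" "\<And>p. p \<le> \<Lambda> \<epsilon> p"
    "\<And>p. \<Lambda> (2*\<epsilon>) p = \<Lambda> \<epsilon> (\<Lambda> \<epsilon> p)"
proof -
  show "bij (\<Lambda> \<epsilon>)" "\<And>p q. \<Lambda> \<epsilon> p \<le> \<Lambda> \<epsilon> q \<longleftrightarrow> p \<le> q" "\<And>p. p \<le> \<Lambda> \<epsilon> p"
    using assms unfolding R_action_def by auto
  fix p
  have "\<Lambda> \<epsilon> \<circ> \<Lambda> \<epsilon> = \<Lambda> (\<epsilon> + \<epsilon>)" using assms unfolding R_action_def by auto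
  then show "\<Lambda> (2*\<epsilon>) p = \<Lambda> \<epsilon> (\<Lambda> \<epsilon> p)" by (metis comp_apply mult_2)
qed

lemma Ex_memD:
  assumes "R_action \<Lambda>" "\<epsilon> \<ge> 0" "I \<noteq> {}" "y \<in> Ex_set \<Lambda> \<epsilon> I"
  shows "\<exists>a. \<Lambda> \<epsilon> a \<in> I \<and> a \<le> y" "\<exists>a\<in>I. y \<le> \<Lambda> \<epsilon> a"
proof -
  have "surj (\<Lambda> \<epsilon>)" using Ract[OF assms(1,2)] bij_is_surj by blast
  then have "\<Lambda> \<epsilon> -` I \<noteq> {}" using assms(3) by (metis empty_iff ex_in_conv surjD vimage_eq)
  then show "\<exists>a. \<Lambda> \<epsilon> a \<in> I \<and> a \<le> y" using assms(4) unfolding Ex_set_def upset_def by auto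
  show "\<exists>a\<in>I. y \<le> \<Lambda> \<epsilon> a" using assms(3,4) unfolding Ex_set_def downset_def by auto
qed

lemma facts_IJ:
  assumes R: "R_action \<Lambda>" and e: "\<epsilon> \<ge> 0" and iI: "is_interval I" and iJ: "is_interval J"
    and IJ: "I \<subseteq> Ex_set \<Lambda> \<epsilon> J" and JI: "J \<subseteq> Ex_set \<Lambda> \<epsilon> I"
  shows "\<And>p q. p \<le> q \<Longrightarrow> (p \<in> I \<and> \<Lambda> \<epsilon> p \<in> J \<and> \<Lambda> \<epsilon> q \<in> J \<longleftrightarrow> p \<in> I \<and> q \<in> I \<and> \<Lambda> \<epsilon> q \<in> J)"
    "\<And>p. (p \<in> I \<and> \<Lambda> \<epsilon> p \<in> J \<and> \<Lambda> \<epsilon> (\<Lambda> \<epsilon> p) \<in> I \<longleftrightarrow> p \<in> I \<and> \<Lambda> \<epsilon> (\<Lambda> \<epsilon> p) \<in> I)"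
proof -
  note RA = Ract[OF R e]
  have ne: "I \<noteq> {}" "J \<noteq> {}" using iI iJ unfolding is_interval_def by auto
  have cI: "\<And>p q r. p \<in> I \<Longrightarrow> q \<in> I \<Longrightarrow> p \<le> r \<Longrightarrow> r \<le> q \<Longrightarrow> r \<in> I"
    using iI unfolding is_interval_def by blast
  have cJ: "\<And>p q r. p \<in> J \<Longrightarrow> q \<in> J \<Longrightarrow> p \<le> r \<Longrightarrow> r \<le> q \<Longrightarrow> r \<in> J"
    using iJ unfolding is_interval_def by blast
  let ?L = "\<Lambda> \<epsilon>"
  have mono: "\<And>p q. p \<le> q \<Longrightarrow> ?L p \<le> ?L q" using RA(2) by blast
  have I1: "\<And>y. y \<in> I \<Longrightarrow> \<exists>a. ?L a \<in> J \<and> a \<le> y" using Ex_memD[OF R e ne(2)] IJ by blast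
  have I2: "\<And>y. y \<in> I \<Longrightarrow> \<exists>a\<in>J. y \<le> ?L a" using Ex_memD[OF R e ne(2)] IJ by blast
  have J1: "\<And>y. y \<in> J \<Longrightarrow> \<exists>a. ?L a \<in> I \<and> a \<le> y" using Ex_memD[OF R e ne(1)] JI by blast
  have J2: "\<And>y. y \<in> J \<Longrightarrow> \<exists>a\<in>I. y \<le> ?L a" using Ex_memD[OF R e ne(1)] JI by blast
  show "p \<in> I \<and> ?L p \<in> J \<and> ?L q \<in> J \<longleftrightarrow> p \<in> I \<and> q \<in> I \<and> ?L q \<in> J" if pq: "p \<le> q" for p q
  proof
    assume h: "p \<in> I \<and> ?L p \<in> J \<and> ?L q \<in> J"
    then obtain a where "a \<in> I" "?L q \<le> ?L a" using J2 by blast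
    then have "q \<le> a" using RA(2) by blast
    then show "p \<in> I \<and> q \<in> I \<and> ?L q \<in> J" using h cI[of p a q] pq \<open>a \<in> I\<close> by blast
  next
    assume h: "p \<in> I \<and> q \<in> I \<and> ?L q \<in> J"
    then obtain b where "?L b \<in> J" "b \<le> p" using I1 by blast
    then show "p \<in> I \<and> ?L p \<in> J \<and> ?L q \<in> J" using h cJ[of "?L b" "?L q" "?L p"] mono pq by blast
  qed
  show "p \<in> I \<and> ?L p \<in> J \<and> ?L (?L p) \<in> I \<longleftrightarrow> p \<in> I \<and> ?L (?L p) \<in> I" for p
  proof
    assume h: "p \<in> I \<and> ?L (?L p) \<in> I"
    then obtain b where b: "?L b \<in> J" "b \<le> p" using I1 by blast
    obtain c where c: "c \<in> J" "?L (?L p) \<le> ?L c" using I2 h by blast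
    then have "?L p \<le> c" using RA(2) by blast
    then show "p \<in> I \<and> ?L p \<in> J \<and> ?L (?L p) \<in> I" using h b c cJ[of "?L b" c "?L p"] mono by blast
  qed auto
qed

lemma interleave_kI:
  assumes R: "R_action \<Lambda>" and e: "\<epsilon> \<ge> 0" and iI: "is_interval I" and iJ: "is_interval J"
    and IJ: "I \<subseteq> Ex_set \<Lambda> \<epsilon> J" and JI: "J \<subseteq> Ex_set \<Lambda> \<epsilon> I"
  shows "interleaved \<Lambda> \<epsilon> (kI I :: ('p::order,'k::field) pmod) (kI J)"
proof -
  note RA = Ract[OF R e]
  note F = facts_IJ[OF R e iI iJ IJ JI]
  note G = facts_IJ[OF R e iJ iI JI IJ]
  have mono: "\<And>p q. p \<le> q \<Longrightarrow> \<Lambda> \<epsilon> p \<le> \<Lambda> \<epsilon> q" using RA(2) by blast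
  define \<alpha> :: "_ \<Rightarrow> 'k mat" where "\<alpha> = (\<lambda>p. chi I J p (\<Lambda> \<epsilon> p))"
  define \<beta> :: "_ \<Rightarrow> 'k mat" where "\<beta> = (\<lambda>p. chi J I p (\<Lambda> \<epsilon> p))"
  have m1: "is_morph (kI I) (shift \<Lambda> \<epsilon> (kI J)) \<alpha>"
    unfolding is_morph_def
  proof (intro conjI allI impI)
    fix p show "\<alpha> p \<in> carrier_mat (pdim (shift \<Lambda> \<epsilon> (kI J)) p) (pdim (kI I) p)"
      by (simp add: \<alpha>_def shift_def kI_pdim chi_carrier)
  next
    fix p q :: 'p assume pq: "p \<le> q"
    show "pmap (shift \<Lambda> \<epsilon> (kI J)) p q * \<alpha> p = \<alpha> q * pmap (kI I) p q"
      using F(1)[OF pq] by (simp add: \<alpha>_def shift_def kI_pmap chi_mult)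
  qed
  have m2: "is_morph (kI J) (shift \<Lambda> \<epsilon> (kI I)) \<beta>"
    unfolding is_morph_def
  proof (intro conjI allI impI)
    fix p show "\<beta> p \<in> carrier_mat (pdim (shift \<Lambda> \<epsilon> (kI I)) p) (pdim (kI J) p)"
      by (simp add: \<beta>_def shift_def kI_pdim chi_carrier)
  next
    fix p q :: 'p assume pq: "p \<le> q"
    show "pmap (shift \<Lambda> \<epsilon> (kI I)) p q * \<beta> p = \<beta> q * pmap (kI J) p q"
      using G(1)[OF pq] by (simp add: \<beta>_def shift_def kI_pmap chi_mult)
  qed
  have c1: "\<beta> (\<Lambda> \<epsilon> p) * \<alpha> p = transl \<Lambda> (2 * \<epsilon>) (kI I) p" for p
    using F(2)[of p] by (simp add: \<alpha>_def \<beta>_def transl_def RA(4) kI_pmap chi_mult) (simp add: chi_def)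
  have c2: "\<alpha> (\<Lambda> \<epsilon> p) * \<beta> p = transl \<Lambda> (2 * \<epsilon>) (kI J) p" for p
    using G(2)[of p] by (simp add: \<alpha>_def \<beta>_def transl_def RA(4) kI_pmap chi_mult) (simp add: chi_def)
  show ?thesis unfolding interleaved_def using m1 m2 c1 c2 by blast
qed


lemma mult1_entry:
  assumes "A \<in> carrier_mat r 1" "B \<in> carrier_mat 1 c" "i < r" "j < c"
  shows "(A * B) $$ (i, j) = A $$ (i, 0) * B $$ (0, j)"
  using assms by (simp add: scalar_prod_def)

lemma mult0_entry:
  assumes "A \<in> carrier_mat r 0" "B \<in> carrier_mat 0 c" "i < r" "j < c"
  shows "(A * B) $$ (i, j) = (0::'a::field)"
  using assms by (simp add: scalar_prod_def)

lemma rank_le1: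
  fixes A B :: "'a::field mat"
  assumes A: "A \<in> carrier_mat n m" and B: "B \<in> carrier_mat m n" and AB: "A * B = 1\<^sub>m n"
    and m: "m \<le> 1"
  shows "n \<le> (m::nat)"
proof (rule ccontr)
  assume "\<not> n \<le> m"
  show False
  proof (cases "m = 0")
    case True
    then have "(A * B) $$ (0,0) = (0::'a)" using mult0_entry[of A n B n 0 0] A B \<open>\<not> n \<le> m\<close> by auto
    then show False using AB \<open>\<not> n \<le> m\<close> by auto
  next
    case False
    then have m1: "m = 1" using m by auto
    have n2: "1 < n" using \<open>\<not> n \<le> m\<close> m1 by auto
    have e: "\<And>i j. i < n \<Longrightarrow> j < n \<Longrightarrow> A $$ (i, 0) * B $$ (0, j) = (if i = j then 1 else 0)"
      using mult1_entry[of A n B n] A B AB m1 by (metis index_one_mat(1))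
    have "A $$ (0,0) * B $$ (0,0) = 1" using e[of 0 0] n2 by auto
    moreover have "A $$ (1,0) * B $$ (0,1) = 1" using e[of 1 1] n2 by auto
    moreover have "A $$ (0,0) * B $$ (0,1) = 0" using e[of 0 1] n2 by auto
    ultimately show False by (metis mult_eq_0_iff zero_neq_one)
  qed
qed

lemma kI_indec:
  assumes iI: "is_interval I" and pm: "is_pmod (kI I :: ('p::order,'k::field) pmod)"
  shows "indecomposable (kI I :: ('p,'k) pmod)"
proof -
  have ne: "I \<noteq> {}" using iI unfolding is_interval_def by auto
  have nz: "nonzero_pmod (kI I :: ('p,'k) pmod)" using ne by (auto simp: nonzero_pmod_def kI_pdim)
  have cI: "\<And>p q r. p \<in> I \<Longrightarrow> q \<in> I \<Longrightarrow> p \<le> r \<Longrightarrow> r \<le> q \<Longrightarrow> r \<in> I"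
    using iI unfolding is_interval_def by blast
  have conn: "\<And>p q. p \<in> I \<Longrightarrow> q \<in> I \<Longrightarrow> (\<lambda>x y. x \<in> I \<and> y \<in> I \<and> (x \<le> y \<or> y \<le> x))\<^sup>*\<^sup>* p q"
    using iI unfolding is_interval_def Ball_def by blast
  have no: False if dec: "is_decomp (kI I :: ('p,'k) pmod) UNIV N \<iota> \<pi>" and nzN: "\<forall>b. nonzero_pmod (N b)"
    for N :: "bool \<Rightarrow> ('p,'k) pmod" and \<iota> \<pi>
  proof -
    let ?m = "\<lambda>p. pdim (kI I :: ('p,'k) pmod) p"
    have D1: "\<iota> b p \<in> carrier_mat (?m p) (pdim (N b) p)" "\<pi> b p \<in> carrier_mat (pdim (N b) p) (?m p)" for b p
      using dec unfolding is_decomp_def is_morph_def by auto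
    have D2: "\<pi> b p * \<iota> b p = 1\<^sub>m (pdim (N b) p)" for b p
      using dec unfolding is_decomp_def by auto
    have D3: "\<pi> a p * \<iota> b p = 0\<^sub>m (pdim (N a) p) (pdim (N b) p)" if "a \<noteq> b" for a b p
      using dec that unfolding is_decomp_def by auto
    have PN: "is_pmod (N b)" for b using dec unfolding is_decomp_def by auto
    have PNc: "p \<le> q \<Longrightarrow> pmap (N b) p q \<in> carrier_mat (pdim (N b) q) (pdim (N b) p)" for b p q
      using PN[of b] unfolding is_pmod_def by auto
    have nat1: "p \<le> q \<Longrightarrow> pmap (kI I) p q * \<iota> b p = \<iota> b q * pmap (N b) p q" for b p q
      using dec unfolding is_decomp_def is_morph_def by auto
    have nat2: "p \<le> q \<Longrightarrow> pmap (N b) p q * \<pi> b p = \<pi> b q * pmap (kI I :: ('p,'k) pmod) p q" for b p q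
      using dec unfolding is_decomp_def is_morph_def by auto
    have le: "pdim (N b) p \<le> ?m p" for b p
      by (rule rank_le1[OF D1(2) D1(1) D2]) (simp add: kI_pdim)
    have outI: "p \<notin> I \<Longrightarrow> pdim (N b) p = 0" for b p using le[of b p] by (simp add: kI_pdim)
    have one: "pdim (N b) p \<noteq> 0 \<Longrightarrow> pdim (N b) p = 1 \<and> p \<in> I" for b p
      using le[of b p] by (simp add: kI_pdim split: if_splits)
    have ent: "(\<pi> b p) $$ (0,0) * (\<iota> b p) $$ (0,0) = 1" if "pdim (N b) p \<noteq> 0" for b p
    proof -
      have "(\<pi> b p * \<iota> b p) $$ (0,0) = 1" using D2[of b p] that by simp
      have "\<pi> b p \<in> carrier_mat 1 1" "\<iota> b p \<in> carrier_mat 1 1" using D1[of b p] one[OF that] by (auto simp: kI_pdim)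
      then show ?thesis using mult1_entry[of "\<pi> b p" 1 "\<iota> b p" 1 0 0] \<open>(\<pi> b p * \<iota> b p) $$ (0,0) = 1\<close> by simp
    qed
    have up: "pdim (N b) q \<noteq> 0" if "p \<le> q" "q \<in> I" "pdim (N b) p \<noteq> 0" for b p q
    proof (rule ccontr)
      assume "\<not> pdim (N b) q \<noteq> 0"
      then have q0: "pdim (N b) q = 0" by simp
      have pI: "p \<in> I" "pdim (N b) p = 1" using one[OF that(3)] by auto
      have "pmap (kI I) p q * \<iota> b p = \<iota> b p" using pI that(2) D1(1)[of b p]
        by (simp add: kI_pmap chi_def kI_pdim)
      then have "(\<iota> b p) $$ (0,0) = (\<iota> b q * pmap (N b) p q) $$ (0,0)" using nat1[OF that(1)] by simp
      also have "\<dots> = 0" using mult0_entry[of "\<iota> b q" 1 "pmap (N b) p q" 1 0 0] D1(1)[of b q] PNc[OF that(1), of b]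
        q0 pI that(2) by (simp add: kI_pdim)
      finally show False using ent[OF that(3)] by simp
    qed
    have down: "pdim (N b) p \<noteq> 0" if "p \<le> q" "p \<in> I" "pdim (N b) q \<noteq> 0" for b p q
    proof (rule ccontr)
      assume "\<not> pdim (N b) p \<noteq> 0"
      then have p0: "pdim (N b) p = 0" by simp
      have qI: "q \<in> I" "pdim (N b) q = 1" using one[OF that(3)] by auto
      have "\<pi> b q * pmap (kI I :: ('p,'k) pmod) p q = \<pi> b q" using qI that(2) D1(2)[of b q]
        by (simp add: kI_pmap chi_def kI_pdim)
      then have "(\<pi> b q) $$ (0,0) = (pmap (N b) p q * \<pi> b p) $$ (0,0)" using nat2[OF that(1)] by simp
      also have "\<dots> = 0" using mult0_entry[of "pmap (N b) p q" 1 "\<pi> b p" 1 0 0] D1(2)[of b p] PNc[OF that(1), of b]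
        p0 qI that(2) by (simp add: kI_pdim)
      finally show False using ent[OF that(3)] by simp
    qed
    have stp: "pdim (N b) p \<noteq> 0 \<longleftrightarrow> pdim (N b) q \<noteq> 0" if "p \<in> I" "q \<in> I" "p \<le> q \<or> q \<le> p" for b p q
      using that up down by blast
    have same: "pdim (N b) p \<noteq> 0 \<longleftrightarrow> pdim (N b) q \<noteq> 0" if "p \<in> I" "q \<in> I" for b p q
    proof -
      have "(\<lambda>x y. x \<in> I \<and> y \<in> I \<and> (x \<le> y \<or> y \<le> x))\<^sup>*\<^sup>* p q" using conn that by blast
      then show ?thesis
      proof (induction rule: rtranclp_induct)
        case base then show ?case by simp
      next
        case (step y z) then show ?case using stp[of y z b] by blast
      qed
    qed
    obtain pT where pT: "pdim (N True) pT \<noteq> 0" using nzN unfolding nonzero_pmod_def by blast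
    obtain pF where pF: "pdim (N False) pF \<noteq> 0" using nzN unfolding nonzero_pmod_def by blast
    have "pF \<in> I" "pT \<in> I" using one pT pF by blast+
    then have pT2: "pdim (N False) pT \<noteq> 0" using same pF by blast
    have "(\<pi> True pT * \<iota> False pT) $$ (0,0) = 0" using D3[of True False pT] pT pT2 by simp
    then have "(\<pi> True pT) $$ (0,0) * (\<iota> False pT) $$ (0,0) = 0"
    proof -
      have "\<pi> True pT \<in> carrier_mat 1 1" "\<iota> False pT \<in> carrier_mat 1 1"
        using D1[of True pT] D1[of False pT] one[OF pT] one[OF pT2] by (auto simp: kI_pdim)
      then show ?thesis using mult1_entry[of "\<pi> True pT" 1 "\<iota> False pT" 1 0 0] \<open>(\<pi> True pT * \<iota> False pT) $$ (0,0) = 0\<close> by simp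
    qed
    moreover have "(\<pi> True pT) $$ (0,0) \<noteq> 0" using ent[OF pT] by (metis mult_zero_left zero_neq_one)
    moreover have "(\<iota> False pT) $$ (0,0) \<noteq> 0" using ent[OF pT2] by (metis mult_zero_right zero_neq_one)
    ultimately show False by simp
  qed
  show ?thesis unfolding indecomposable_def using pm nz no by blast
qed


lemma decomp_reindex:
  assumes d: "is_decomp V X M \<iota> \<pi>" and f: "inj_on f X"
  shows "is_decomp V (f ` X) (\<lambda>x. M (inv_into X f x)) (\<lambda>x. \<iota> (inv_into X f x)) (\<lambda>x. \<pi> (inv_into X f x))"
proof -
  let ?g = "inv_into X f"
  have g: "\<And>x. x \<in> f ` X \<Longrightarrow> ?g x \<in> X" by (simp add: inv_into_into)
  have gi: "\<And>x y. x \<in> f ` X \<Longrightarrow> y \<in> f ` X \<Longrightarrow> ?g x = ?g y \<longleftrightarrow> x = y"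
    by (metis f_inv_into_f)
  have dd: "(\<forall>x\<in>X. is_pmod (M x) \<and> is_morph (M x) V (\<iota> x) \<and> is_morph V (M x) (\<pi> x)) \<and>
     (\<forall>x\<in>X. \<forall>y\<in>X. \<forall>p. \<pi> x p * \<iota> y p =
        (if x = y then 1\<^sub>m (pdim (M x) p) else 0\<^sub>m (pdim (M x) p) (pdim (M y) p))) \<and>
     (\<forall>p. finite {x\<in>X. pdim (M x) p \<noteq> 0} \<and>
        (\<forall>i < pdim V p. \<forall>j < pdim V p.
           (\<Sum>x\<in>{x\<in>X. pdim (M x) p \<noteq> 0}. (\<iota> x p * \<pi> x p) $$ (i, j)) = (1\<^sub>m (pdim V p)) $$ (i, j)))"
    using d unfolding is_decomp_def .
  note d1 = conjunct1[OF dd] and d2 = conjunct1[OF conjunct2[OF dd]] and d3 = conjunct2[OF conjunct2[OF dd]]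
  have S: "{x\<in>f ` X. pdim (M (?g x)) p \<noteq> 0} = f ` {x\<in>X. pdim (M x) p \<noteq> 0}" for p
    using f by (auto simp: inv_into_f_f)
  have P1: "\<forall>x\<in>f ` X. is_pmod (M (?g x)) \<and> is_morph (M (?g x)) V (\<iota> (?g x)) \<and> is_morph V (M (?g x)) (\<pi> (?g x))"
    using d1 g by blast
  have P2: "\<forall>x\<in>f ` X. \<forall>y\<in>f ` X. \<forall>p. \<pi> (?g x) p * \<iota> (?g y) p = (if x = y then 1\<^sub>m (pdim (M (?g x)) p) else 0\<^sub>m (pdim (M (?g x)) p) (pdim (M (?g y)) p))"
  proof (intro ballI allI)
    fix x y p assume that: "x \<in> f ` X" "y \<in> f ` X"
    have "\<pi> (?g x) p * \<iota> (?g y) p = (if ?g x = ?g y then 1\<^sub>m (pdim (M (?g x)) p) else 0\<^sub>m (pdim (M (?g x)) p) (pdim (M (?g y)) p))"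
      using d2 g[OF that(1)] g[OF that(2)] by blast
    then show "\<pi> (?g x) p * \<iota> (?g y) p = (if x = y then 1\<^sub>m (pdim (M (?g x)) p) else 0\<^sub>m (pdim (M (?g x)) p) (pdim (M (?g y)) p))"
      using gi[OF that] by simp
  qed
  have P3: "finite {x\<in>f ` X. pdim (M (?g x)) p \<noteq> 0} \<and> (\<forall>i < pdim V p. \<forall>j < pdim V p.
      (\<Sum>x\<in>{x\<in>f ` X. pdim (M (?g x)) p \<noteq> 0}. (\<iota> (?g x) p * \<pi> (?g x) p) $$ (i, j)) = 1\<^sub>m (pdim V p) $$ (i, j))" for p
  proof (intro conjI allI impI)
    show "finite {x\<in>f ` X. pdim (M (?g x)) p \<noteq> 0}" using d3 unfolding S by blast
    fix i j assume ij: "i < pdim V p" "j < pdim V p"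
    let ?F = "\<lambda>x. (\<iota> (?g x) p * \<pi> (?g x) p) $$ (i, j)"
    let ?A = "{x\<in>X. pdim (M x) p \<noteq> 0}"
    have injA: "inj_on f ?A" by (rule inj_on_subset[OF f]) auto
    have "sum ?F (f ` ?A) = sum (?F \<circ> f) ?A" by (rule sum.reindex[OF injA])
    also have "\<dots> = (\<Sum>x\<in>?A. (\<iota> x p * \<pi> x p) $$ (i, j))"
      by (rule sum.cong) (auto simp: inv_into_f_f[OF f])
    also have "\<dots> = 1\<^sub>m (pdim V p) $$ (i, j)" using d3 ij by blast
    finally show "(\<Sum>x\<in>{x\<in>f ` X. pdim (M (?g x)) p \<noteq> 0}. (\<iota> (?g x) p * \<pi> (?g x) p) $$ (i, j)) = 1\<^sub>m (pdim V p) $$ (i, j)"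
      unfolding S .
  qed
  show ?thesis unfolding is_decomp_def using P1 P2 P3 by (intro conjI) blast+
qed

lemma bi_reindex:
  assumes b: "bottleneck_interleaving \<Lambda> \<epsilon> V W X M \<iota>V \<pi>V Y N \<iota>W \<pi>W X0 Y0 \<sigma>"
    and f: "inj_on f X" and h: "inj_on h Y"
  shows "bottleneck_interleaving \<Lambda> \<epsilon> V W (f ` X) (\<lambda>x. M (inv_into X f x)) (\<lambda>x. \<iota>V (inv_into X f x)) (\<lambda>x. \<pi>V (inv_into X f x))
     (h ` Y) (\<lambda>x. N (inv_into Y h x)) (\<lambda>x. \<iota>W (inv_into Y h x)) (\<lambda>x. \<pi>W (inv_into Y h x))
     (f ` X0) (h ` Y0) (\<lambda>x. h (\<sigma> (inv_into X f x)))"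
proof -
  have B1: "indec_decomp V X M \<iota>V \<pi>V" and B2: "indec_decomp W Y N \<iota>W \<pi>W"
    and X0: "X0 \<subseteq> X" "Y0 \<subseteq> Y" "bij_betw \<sigma> X0 Y0"
    and T1: "\<forall>x\<in>X - X0. trivial \<Lambda> (2 * \<epsilon>) (M x)"
    and T2: "\<forall>y\<in>Y - Y0. trivial \<Lambda> (2 * \<epsilon>) (N y)"
    and IL: "\<forall>x\<in>X0. interleaved \<Lambda> \<epsilon> (M x) (N (\<sigma> x))"
    using b unfolding bottleneck_interleaving_def by blast+
  have d1: "indec_decomp V (f ` X) (\<lambda>x. M (inv_into X f x)) (\<lambda>x. \<iota>V (inv_into X f x)) (\<lambda>x. \<pi>V (inv_into X f x))"
  proof -
    have "is_decomp V X M \<iota>V \<pi>V" "\<forall>x\<in>X. indecomposable (M x)" using B1 unfolding indec_decomp_def by blast+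
    then show ?thesis unfolding indec_decomp_def using decomp_reindex[OF _ f, of V M \<iota>V \<pi>V]
      by (simp add: inv_into_into)
  qed
  have d2: "indec_decomp W (h ` Y) (\<lambda>x. N (inv_into Y h x)) (\<lambda>x. \<iota>W (inv_into Y h x)) (\<lambda>x. \<pi>W (inv_into Y h x))"
  proof -
    have "is_decomp W Y N \<iota>W \<pi>W" "\<forall>x\<in>Y. indecomposable (N x)" using B2 unfolding indec_decomp_def by blast+
    then show ?thesis unfolding indec_decomp_def using decomp_reindex[OF _ h, of W N \<iota>W \<pi>W]
      by (simp add: inv_into_into)
  qed
  have bij: "bij_betw (\<lambda>x. h (\<sigma> (inv_into X f x))) (f ` X0) (h ` Y0)"
  proof -
    have g0: "bij_betw (inv_into X0 f) (f ` X0) X0"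
      by (rule bij_betw_inv_into) (rule inj_on_imp_bij_betw[OF inj_on_subset[OF f X0(1)]])
    have ee: "\<And>x. x \<in> f ` X0 \<Longrightarrow> inv_into X0 f x = inv_into X f x" using f X0(1) inj_on_subset[OF f X0(1)] by (auto simp: inv_into_f_f subset_iff)
    have g: "bij_betw (inv_into X f) (f ` X0) X0" using g0 bij_betw_cong[of "f ` X0" "inv_into X0 f" "inv_into X f" X0, OF ee] by simp
    have hb: "bij_betw h Y0 (h ` Y0)" using h X0(2) inj_on_subset inj_on_imp_bij_betw by blast
    show ?thesis using bij_betw_trans[OF bij_betw_trans[OF g X0(3)] hb] unfolding comp_def .
  qed
  have t1: "\<forall>x\<in>f ` X - f ` X0. trivial \<Lambda> (2 * \<epsilon>) (M (inv_into X f x))"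
  proof
    fix x assume x: "x \<in> f ` X - f ` X0"
    then obtain x0 where x0: "x0 \<in> X" "x = f x0" by blast
    then have "x0 \<notin> X0" using x by blast
    moreover have "inv_into X f x = x0" using x0 f by (simp add: inv_into_f_f)
    ultimately show "trivial \<Lambda> (2 * \<epsilon>) (M (inv_into X f x))" using T1 x0 by simp
  qed
  have t2: "\<forall>x\<in>h ` Y - h ` Y0. trivial \<Lambda> (2 * \<epsilon>) (N (inv_into Y h x))"
  proof
    fix x assume x: "x \<in> h ` Y - h ` Y0"
    then obtain x0 where x0: "x0 \<in> Y" "x = h x0" by blast
    then have "x0 \<notin> Y0" using x by blast
    moreover have "inv_into Y h x = x0" using x0 h by (simp add: inv_into_f_f)
    ultimately show "trivial \<Lambda> (2 * \<epsilon>) (N (inv_into Y h x))" using T2 x0 by simp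
  qed
  have il: "\<forall>x\<in>f ` X0. interleaved \<Lambda> \<epsilon> (M (inv_into X f x)) (N (inv_into Y h (h (\<sigma> (inv_into X f x)))))"
  proof
    fix x assume "x \<in> f ` X0"
    then obtain x0 where x0: "x0 \<in> X0" "x = f x0" by blast
    then have e1: "inv_into X f x = x0" using f X0 by (simp add: inv_into_f_f subset_iff)
    have "\<sigma> x0 \<in> Y" using bij_betw_apply[OF X0(3) x0(1)] X0(2) by blast
    then have e2: "inv_into Y h (h (\<sigma> x0)) = \<sigma> x0" using h by (simp add: inv_into_f_f)
    show "interleaved \<Lambda> \<epsilon> (M (inv_into X f x)) (N (inv_into Y h (h (\<sigma> (inv_into X f x)))))"
      unfolding e1 e2 using IL x0 by blast
  qed
  have sub: "f ` X0 \<subseteq> f ` X" "h ` Y0 \<subseteq> h ` Y" using X0 by blast+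
  show ?thesis unfolding bottleneck_interleaving_def
    by (intro conjI d1 d2 bij t1 t2 il sub)
qed

lemma exists_inj:
  fixes I :: "'i \<Rightarrow> 'p set"
  assumes "\<forall>x\<in>X. I x \<noteq> {}" "\<forall>p. finite {x\<in>X. p \<in> I x}"
  shows "\<exists>f :: 'i \<Rightarrow> 'p \<times> nat. inj_on f X"
proof -
  define pt where "pt x = (SOME p. p \<in> I x)" for x
  have pt: "x \<in> X \<Longrightarrow> pt x \<in> I x" for x using assms(1) unfolding pt_def by (simp add: some_in_eq)
  define f where "f x = (pt x, to_nat_on {y\<in>X. pt x \<in> I y} x)" for x
  have "inj_on f X"
  proof (rule inj_onI)
    fix x y assume xy: "x \<in> X" "y \<in> X" "f x = f y"
    then have e: "pt x = pt y" unfolding f_def by simp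
    have c: "countable {z\<in>X. pt x \<in> I z}" using assms(2) countable_finite by blast
    have "pt x \<in> I x" using pt xy(1) by blast
    moreover have "pt x \<in> I y" using pt[OF xy(2)] e by simp
    ultimately have "x \<in> {z\<in>X. pt x \<in> I z}" "y \<in> {z\<in>X. pt x \<in> I z}" using xy by auto
    then show "x = y" using xy c e unfolding f_def by auto
  qed
  then show ?thesis by blast
qed


lemma indec_of_interval:
  assumes "interval_decomp V X I \<iota> \<pi>"
  shows "indec_decomp V X (\<lambda>x. kI (I x)) \<iota> \<pi>"
proof -
  have d: "is_decomp V X (\<lambda>x. kI (I x)) \<iota> \<pi>" and iv: "\<forall>x\<in>X. is_interval (I x)"
    using assms unfolding interval_decomp_def by blast+
  have "\<forall>x\<in>X. is_pmod (kI (I x) :: ('a, 'b) pmod)" using d unfolding is_decomp_def by blast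
  then show ?thesis unfolding indec_decomp_def using d iv kI_indec by blast
qed

lemma inj_of_interval:
  fixes I :: "'i \<Rightarrow> 'p::order set" and V :: "('p, 'k::field) pmod"
  assumes "interval_decomp V X I \<iota> \<pi>"
  shows "\<exists>f :: 'i \<Rightarrow> 'p \<times> nat. inj_on f X"
proof (rule exists_inj)
  have d: "is_decomp V X (\<lambda>x. kI (I x)) \<iota> \<pi>" and iv: "\<forall>x\<in>X. is_interval (I x)"
    using assms unfolding interval_decomp_def by blast+
  show "\<forall>x\<in>X. I x \<noteq> {}" using iv unfolding is_interval_def by blast
  show "\<forall>p. finite {x\<in>X. p \<in> I x}"
  proof
    fix p
    have "finite {x\<in>X. pdim (kI (I x) :: ('p, 'k) pmod) p \<noteq> 0}" using d unfolding is_decomp_def by blast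
    moreover have "{x\<in>X. pdim (kI (I x) :: ('p, 'k) pmod) p \<noteq> 0} = {x\<in>X. p \<in> I x}" by (auto simp: kI_pdim)
    ultimately show "finite {x\<in>X. p \<in> I x}" by simp
  qed
qed

theorem proposition2p18:
  fixes \<Lambda> :: "real \<Rightarrow> 'p::order \<Rightarrow> 'p"
    and V W :: "('p, 'k::field) pmod"
    and X :: "'i set" and I :: "'i \<Rightarrow> 'p set" and \<iota>V \<pi>V :: "'i \<Rightarrow> 'p \<Rightarrow> 'k mat"
    and Y :: "'j set" and J :: "'j \<Rightarrow> 'p set" and \<iota>W \<pi>W :: "'j \<Rightarrow> 'p \<Rightarrow> 'k mat"
  assumes "R_action \<Lambda>"
    and "is_pmod V" and "is_pmod W"
    and "interval_decomp V X I \<iota>V \<pi>V"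
    and "interval_decomp W Y J \<iota>W \<pi>W"
  shows "(\<forall>\<epsilon> X0 Y0 \<sigma>. \<epsilon> \<ge> 0 \<and> Lmatching \<Lambda> \<epsilon> X I Y J X0 Y0 \<sigma> TYPE('k) \<longrightarrow>
            bottleneck_interleaving \<Lambda> \<epsilon> V W X (\<lambda>x. kI (I x)) \<iota>V \<pi>V Y (\<lambda>y. kI (J y)) \<iota>W \<pi>W X0 Y0 \<sigma>)
       \<and> dBI \<Lambda> V W \<le> dB \<Lambda> X I Y J TYPE('k)"
proof -
  note R = assms(1)
  have iX: "\<forall>x\<in>X. is_interval (I x)" using assms(4) unfolding interval_decomp_def by blast
  have iY: "\<forall>y\<in>Y. is_interval (J y)" using assms(5) unfolding interval_decomp_def by blast
  have dV: "indec_decomp V X (\<lambda>x. kI (I x)) \<iota>V \<pi>V" by (rule indec_of_interval[OF assms(4)])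
  have dW: "indec_decomp W Y (\<lambda>x. kI (J x)) \<iota>W \<pi>W" by (rule indec_of_interval[OF assms(5)])
  have P1: "bottleneck_interleaving \<Lambda> \<epsilon> V W X (\<lambda>x. kI (I x)) \<iota>V \<pi>V Y (\<lambda>y. kI (J y)) \<iota>W \<pi>W X0 Y0 \<sigma>"
    if e: "\<epsilon> \<ge> 0" and L: "Lmatching \<Lambda> \<epsilon> X I Y J X0 Y0 \<sigma> TYPE('k)" for \<epsilon> X0 Y0 \<sigma>
  proof -
    have L1: "X0 \<subseteq> X" "Y0 \<subseteq> Y" "bij_betw \<sigma> X0 Y0"
      and L2: "\<forall>x\<in>X - X0. trivial \<Lambda> (2 * \<epsilon>) (kI (I x) :: ('p, 'k) pmod)"
      and L3: "\<forall>y\<in>Y - Y0. trivial \<Lambda> (2 * \<epsilon>) (kI (J y) :: ('p, 'k) pmod)"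
      and L4: "\<forall>x\<in>X0. I x \<subseteq> Ex_set \<Lambda> \<epsilon> (J (\<sigma> x)) \<and> J (\<sigma> x) \<subseteq> Ex_set \<Lambda> \<epsilon> (I x)"
      using L unfolding Lmatching_def by blast+
    have il: "\<forall>x\<in>X0. interleaved \<Lambda> \<epsilon> (kI (I x) :: ('p, 'k) pmod) (kI (J (\<sigma> x)))"
    proof
      fix x assume x: "x \<in> X0"
      have "\<sigma> x \<in> Y" using bij_betw_apply[OF L1(3) x] L1(2) by blast
      then have "is_interval (J (\<sigma> x))" using iY by blast
      moreover have "is_interval (I x)" using iX x L1(1) by blast
      ultimately show "interleaved \<Lambda> \<epsilon> (kI (I x) :: ('p, 'k) pmod) (kI (J (\<sigma> x)))"
        using interleave_kI[OF R e] L4 x by blast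
    qed
    show ?thesis unfolding bottleneck_interleaving_def
      by (intro conjI dV dW L1 L2 L3 il)
  qed
  obtain f :: "'i \<Rightarrow> 'p \<times> nat" where f: "inj_on f X" using inj_of_interval[OF assms(4)] by blast
  obtain h :: "'j \<Rightarrow> 'p \<times> nat" where h: "inj_on h Y" using inj_of_interval[OF assms(5)] by blast
  have sub: "{ereal \<epsilon> | \<epsilon>. \<epsilon> \<ge> 0 \<and> (\<exists>X0 Y0 \<sigma>. Lmatching \<Lambda> \<epsilon> X I Y J X0 Y0 \<sigma> TYPE('k))}
    \<subseteq> {ereal \<epsilon> | \<epsilon>. \<epsilon> \<ge> 0 \<and>
     (\<exists>(X :: ('p \<times> nat) set) M \<iota>V \<pi>V (Y :: ('p \<times> nat) set) N \<iota>W \<pi>W X0 Y0 \<sigma>.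
        bottleneck_interleaving \<Lambda> \<epsilon> V W X M \<iota>V \<pi>V Y N \<iota>W \<pi>W X0 Y0 \<sigma>)}"
  proof
    fix z assume "z \<in> {ereal \<epsilon> | \<epsilon>. \<epsilon> \<ge> 0 \<and> (\<exists>X0 Y0 \<sigma>. Lmatching \<Lambda> \<epsilon> X I Y J X0 Y0 \<sigma> TYPE('k))}"
    then obtain \<epsilon> X0 Y0 \<sigma> where z: "z = ereal \<epsilon>" and e: "\<epsilon> \<ge> 0"
      and L: "Lmatching \<Lambda> \<epsilon> X I Y J X0 Y0 \<sigma> TYPE('k)" by blast
    have "bottleneck_interleaving \<Lambda> \<epsilon> V W (f ` X) (\<lambda>x. kI (I (inv_into X f x))) (\<lambda>x. \<iota>V (inv_into X f x)) (\<lambda>x. \<pi>V (inv_into X f x))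
     (h ` Y) (\<lambda>x. kI (J (inv_into Y h x))) (\<lambda>x. \<iota>W (inv_into Y h x)) (\<lambda>x. \<pi>W (inv_into Y h x))
     (f ` X0) (h ` Y0) (\<lambda>x. h (\<sigma> (inv_into X f x)))"
      by (rule bi_reindex[OF P1[OF e L] f h])
    then show "z \<in> {ereal \<epsilon> | \<epsilon>. \<epsilon> \<ge> 0 \<and>
     (\<exists>(X :: ('p \<times> nat) set) M \<iota>V \<pi>V (Y :: ('p \<times> nat) set) N \<iota>W \<pi>W X0 Y0 \<sigma>.
        bottleneck_interleaving \<Lambda> \<epsilon> V W X M \<iota>V \<pi>V Y N \<iota>W \<pi>W X0 Y0 \<sigma>)}"
      using z e by blast
  qed
  have "dBI \<Lambda> V W \<le> dB \<Lambda> X I Y J TYPE('k)"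
    unfolding dBI_def dB_def by (rule Inf_superset_mono[OF sub])
  then show ?thesis using P1 by blast
qed

end
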